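(* Let $(K,*,\circ)$ be a left skew brace and let $G\subseteq K$ be a sub-skew brace (a subset which is a subgroup of both $(K,* )$ and $(K,\circ)$), with inclusion $i\colon G\to K$. Then $i$ is a normal subobject in the category $\mathsf{SKB}$ of left skew braces if and only if the following three conditions hold: (1) $G$ is a normal subgroup of $(K,* )$; (2) $G$ is a normal subgroup of $(K,\circ)$; (3') $\lambda_x(G)=G$ for all $x\in K$.
   Context: A (left) skew brace is a triple $(A,*,\circ)$ with $(A,* )$ and $(A,\circ)$ groups such that $a\circ(b*c)=(a\circ b)*a^{-*}*(a\circ c)$ for all $a,b,c\in A$; here $a^{-*}$ and $a^{-\circ}$ denote inverses in $(A,* )$ and $(A,\circ)$. The two groups have the same identity $1$. Morphisms in $\mathsf{SKB}$ are maps that are homomorphisms for both operations. For $a,u\in A$ put $\lambda_a(u)=a^{-*}*(a\circ u)$. A congruence on $K$ is an equivalence relation $R\subseteq K\times K$ that is a sub-skew brace of the product skew brace $K\times K$ (componentwise operations). A sub-skew brace $G\subseteq K$ is called normal (normal subobject in $\mathsf{SKB}$) if there is a congruence $R$ on $K$ such that $G$ is exactly the $R$-equivalence class of $1$ (equivalently, in categorical terms, the inclusion is normal to some internal equivalence relation $R$: the restriction of $R$ to $G$ is $G\times G$ and whenever $g\in G$ and $(g,y)\in R$ then $y\in G$). *)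

theory Defs
  imports "HOL-Algebra.Algebra"
begin

definition skew_brace :: "('a, 'm) monoid_scheme \<Rightarrow> ('a, 'n) monoid_scheme \<Rightarrow> bool" where
  "skew_brace A B \<longleftrightarrow> group A \<and> group B \<and> carrier A = carrier B \<and>
     (\<forall>a\<in>carrier A. \<forall>b\<in>carrier A. \<forall>c\<in>carrier A.
        a \<otimes>\<^bsub>B\<^esub> (b \<otimes>\<^bsub>A\<^esub> c)
        = (a \<otimes>\<^bsub>B\<^esub> b) \<otimes>\<^bsub>A\<^esub> inv\<^bsub>A\<^esub> a \<otimes>\<^bsub>A\<^esub> (a \<otimes>\<^bsub>B\<^esub> c))"

definition sub_skew_brace :: "'a set \<Rightarrow> ('a, 'm) monoid_scheme \<Rightarrow> ('a, 'n) monoid_scheme \<Rightarrow> bool" where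
  "sub_skew_brace G A B \<longleftrightarrow> subgroup G A \<and> subgroup G B"

definition skb_lambda :: "('a, 'm) monoid_scheme \<Rightarrow> ('a, 'n) monoid_scheme \<Rightarrow> 'a \<Rightarrow> 'a \<Rightarrow> 'a" where
  "skb_lambda A B a u = inv\<^bsub>A\<^esub> a \<otimes>\<^bsub>A\<^esub> (a \<otimes>\<^bsub>B\<^esub> u)"

definition skb_congruence :: "('a \<times> 'a) set \<Rightarrow> ('a, 'm) monoid_scheme \<Rightarrow> ('a, 'n) monoid_scheme \<Rightarrow> bool" where
  "skb_congruence R A B \<longleftrightarrow> equiv (carrier A) R \<and> sub_skew_brace R (A \<times>\<times> A) (B \<times>\<times> B)"

text \<open>Normal sub-skew brace (normal subobject in SKB): G is the class of 1 for some congruence.\<close>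
definition normal_sub_skew_brace :: "'a set \<Rightarrow> ('a, 'm) monoid_scheme \<Rightarrow> ('a, 'n) monoid_scheme \<Rightarrow> bool" where
  "normal_sub_skew_brace G A B \<longleftrightarrow>
     (\<exists>R. skb_congruence R A B \<and> G = {y. (\<one>\<^bsub>A\<^esub>, y) \<in> R})"

end

theory Submission
  imports Defs
begin

lemma (in group) tr: "x \<in> carrier G \<Longrightarrow> y \<in> carrier G \<Longrightarrow> z \<in> carrier G \<Longrightarrow> (inv x \<otimes> y) \<otimes> (inv y \<otimes> z) = inv x \<otimes> z"
  by (simp add: m_assoc[symmetric]) (simp add: m_assoc)
lemma (in group) tr2: "x \<in> carrier G \<Longrightarrow> y \<in> carrier G \<Longrightarrow> x \<otimes> (inv x \<otimes> y) = y"
  by (simp add: m_assoc[symmetric])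
lemma (in group) tr3: "x \<in> carrier G \<Longrightarrow> y \<in> carrier G \<Longrightarrow> inv x \<otimes> (x \<otimes> y) = y"
  by (simp add: m_assoc[symmetric])

lemma rel_subgroup:
  fixes H :: "('a, 'b) monoid_scheme" (structure)
  assumes "group H" "N \<lhd> H"
  shows "subgroup {(x,y). x \<in> carrier H \<and> y \<in> carrier H \<and> inv\<^bsub>H\<^esub> x \<otimes>\<^bsub>H\<^esub> y \<in> N} (H \<times>\<times> H)"
proof -
  interpret group H by fact
  interpret normal N H by fact
  have NC: "N \<subseteq> carrier H" by (rule subset)
  show ?thesis
  proof
    show "{(x,y). x \<in> carrier H \<and> y \<in> carrier H \<and> inv x \<otimes> y \<in> N} \<subseteq> carrier (H \<times>\<times> H)" by auto
  next
    show "\<one>\<^bsub>H \<times>\<times> H\<^esub> \<in> {(x,y). x \<in> carrier H \<and> y \<in> carrier H \<and> inv x \<otimes> y \<in> N}" by simp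
  next
    fix p q assume p: "p \<in> {(x,y). x \<in> carrier H \<and> y \<in> carrier H \<and> inv x \<otimes> y \<in> N}"
      and q: "q \<in> {(x,y). x \<in> carrier H \<and> y \<in> carrier H \<and> inv x \<otimes> y \<in> N}"
    obtain a b where ab: "p = (a,b)" "a \<in> carrier H" "b \<in> carrier H" "inv a \<otimes> b \<in> N" using p by auto
    obtain c d where cd: "q = (c,d)" "c \<in> carrier H" "d \<in> carrier H" "inv c \<otimes> d \<in> N" using q by auto
    have e: "inv (a \<otimes> c) \<otimes> (b \<otimes> d) = (inv c \<otimes> (inv a \<otimes> b) \<otimes> c) \<otimes> (inv c \<otimes> d)"
      using ab cd by (simp add: inv_mult_group m_assoc tr2 tr3)
    have "inv c \<otimes> (inv a \<otimes> b) \<otimes> c \<in> N" using inv_op_closed1 ab cd by blast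
    then have "inv (a \<otimes> c) \<otimes> (b \<otimes> d) \<in> N" using e cd by simp
    then show "p \<otimes>\<^bsub>H \<times>\<times> H\<^esub> q \<in> {(x,y). x \<in> carrier H \<and> y \<in> carrier H \<and> inv x \<otimes> y \<in> N}"
      using ab cd by simp
  next
    fix p assume p: "p \<in> {(x,y). x \<in> carrier H \<and> y \<in> carrier H \<and> inv x \<otimes> y \<in> N}"
    obtain a b where ab: "p = (a,b)" "a \<in> carrier H" "b \<in> carrier H" "inv a \<otimes> b \<in> N" using p by auto
    have e: "inv (inv a) \<otimes> inv b = a \<otimes> inv (inv a \<otimes> b) \<otimes> inv a"
      using ab by (simp add: inv_mult_group m_assoc tr2 tr3)
    have "a \<otimes> inv (inv a \<otimes> b) \<otimes> inv a \<in> N" using inv_op_closed2 ab by blast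
    then show "inv\<^bsub>H \<times>\<times> H\<^esub> p \<in> {(x,y). x \<in> carrier H \<and> y \<in> carrier H \<and> inv x \<otimes> y \<in> N}"
      using ab e by (simp add: inv_DirProd[OF group_axioms group_axioms])
  qed
qed

theorem proposition2p4:
  fixes A :: "('a, 'm) monoid_scheme" and B :: "('a, 'n) monoid_scheme" and G :: "'a set"
  assumes "skew_brace A B"
    and "sub_skew_brace G A B"
  shows "normal_sub_skew_brace G A B \<longleftrightarrow>
           (G \<lhd> A \<and> G \<lhd> B \<and> (\<forall>x\<in>carrier A. skb_lambda A B x ` G = G))"
proof -
  interpret A: group A using assms(1) unfolding skew_brace_def by blast
  interpret B: group B using assms(1) unfolding skew_brace_def by blast
  have cB: "carrier B = carrier A" using assms(1) unfolding skew_brace_def by blast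
  have br: "\<And>a b c. a \<in> carrier A \<Longrightarrow> b \<in> carrier A \<Longrightarrow> c \<in> carrier A \<Longrightarrow>
        a \<otimes>\<^bsub>B\<^esub> (b \<otimes>\<^bsub>A\<^esub> c)
        = (a \<otimes>\<^bsub>B\<^esub> b) \<otimes>\<^bsub>A\<^esub> inv\<^bsub>A\<^esub> a \<otimes>\<^bsub>A\<^esub> (a \<otimes>\<^bsub>B\<^esub> c)"
    using assms(1) unfolding skew_brace_def by blast
  have sgA: "subgroup G A" and sgB: "subgroup G B" using assms(2) by (auto simp: sub_skew_brace_def)
  have GK: "G \<subseteq> carrier A" using sgA subgroup.subset by blast
  have one: "\<one>\<^bsub>B\<^esub> = \<one>\<^bsub>A\<^esub>"
  proof -
    have b1: "\<one>\<^bsub>B\<^esub> \<in> carrier A" using cB by auto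
    have "\<one>\<^bsub>B\<^esub> \<otimes>\<^bsub>B\<^esub> (\<one>\<^bsub>A\<^esub> \<otimes>\<^bsub>A\<^esub> \<one>\<^bsub>A\<^esub>)
        = (\<one>\<^bsub>B\<^esub> \<otimes>\<^bsub>B\<^esub> \<one>\<^bsub>A\<^esub>) \<otimes>\<^bsub>A\<^esub> inv\<^bsub>A\<^esub> \<one>\<^bsub>B\<^esub> \<otimes>\<^bsub>A\<^esub> (\<one>\<^bsub>B\<^esub> \<otimes>\<^bsub>B\<^esub> \<one>\<^bsub>A\<^esub>)"
      by (rule br[OF b1 A.one_closed A.one_closed])
    moreover have e1: "\<one>\<^bsub>B\<^esub> \<otimes>\<^bsub>B\<^esub> \<one>\<^bsub>A\<^esub> = \<one>\<^bsub>A\<^esub>" using B.l_one[of "\<one>\<^bsub>A\<^esub>"] cB by simp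
    ultimately have "\<one>\<^bsub>A\<^esub> = \<one>\<^bsub>A\<^esub> \<otimes>\<^bsub>A\<^esub> inv\<^bsub>A\<^esub> \<one>\<^bsub>B\<^esub> \<otimes>\<^bsub>A\<^esub> \<one>\<^bsub>A\<^esub>"
      by (simp only: e1 A.l_one[OF A.one_closed])
    then have "inv\<^bsub>A\<^esub> \<one>\<^bsub>B\<^esub> = \<one>\<^bsub>A\<^esub>" using b1 by (metis A.l_one A.r_one A.inv_closed)
    then show ?thesis using b1 by (metis A.inv_inv A.inv_one)
  qed
  show ?thesis
  proof
    assume "normal_sub_skew_brace G A B"
    then obtain R where cong: "skb_congruence R A B" and GR: "G = {y. (\<one>\<^bsub>A\<^esub>, y) \<in> R}"
      unfolding normal_sub_skew_brace_def by blast
    have eq: "equiv (carrier A) R" and RA: "subgroup R (A \<times>\<times> A)" and RB: "subgroup R (B \<times>\<times> B)"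
      using cong unfolding skb_congruence_def sub_skew_brace_def by blast+
    have refl: "\<And>x. x \<in> carrier A \<Longrightarrow> (x,x) \<in> R" using eq by (simp add: equiv_def refl_on_def)
    have mA: "\<And>p q. p \<in> R \<Longrightarrow> q \<in> R \<Longrightarrow> p \<otimes>\<^bsub>A \<times>\<times> A\<^esub> q \<in> R" by (rule subgroup.m_closed[OF RA])
    have mB: "\<And>p q. p \<in> R \<Longrightarrow> q \<in> R \<Longrightarrow> p \<otimes>\<^bsub>B \<times>\<times> B\<^esub> q \<in> R" by (rule subgroup.m_closed[OF RB])
    have iA: "\<And>x. x \<in> carrier A \<Longrightarrow> (inv\<^bsub>A\<^esub> x, inv\<^bsub>A\<^esub> x) \<in> R"
    proof -
      fix x assume x: "x \<in> carrier A"
      have "inv\<^bsub>A \<times>\<times> A\<^esub> (x,x) \<in> R" by (rule subgroup.m_inv_closed[OF RA refl[OF x]])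
      then show "(inv\<^bsub>A\<^esub> x, inv\<^bsub>A\<^esub> x) \<in> R" using x by (simp add: inv_DirProd[OF A.group_axioms A.group_axioms])
    qed
    have iB: "\<And>x. x \<in> carrier A \<Longrightarrow> (inv\<^bsub>B\<^esub> x, inv\<^bsub>B\<^esub> x) \<in> R"
    proof -
      fix x assume x: "x \<in> carrier A"
      have "inv\<^bsub>B \<times>\<times> B\<^esub> (x,x) \<in> R" by (rule subgroup.m_inv_closed[OF RB refl[OF x]])
      then show "(inv\<^bsub>B\<^esub> x, inv\<^bsub>B\<^esub> x) \<in> R" using x cB by (simp add: inv_DirProd[OF B.group_axioms B.group_axioms])
    qed
    have Gm: "\<And>g. g \<in> G \<Longrightarrow> (\<one>\<^bsub>A\<^esub>, g) \<in> R" using GR by blast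
    have nA: "G \<lhd> A"
      unfolding A.normal_inv_iff
    proof (intro conjI sgA ballI)
      fix x g assume x: "x \<in> carrier A" and g: "g \<in> G"
      have gc: "g \<in> carrier A" using g GK by auto
      have "((x,x) \<otimes>\<^bsub>A \<times>\<times> A\<^esub> (\<one>\<^bsub>A\<^esub>, g)) \<otimes>\<^bsub>A \<times>\<times> A\<^esub> (inv\<^bsub>A\<^esub> x, inv\<^bsub>A\<^esub> x) \<in> R"
        by (rule mA[OF mA[OF refl[OF x] Gm[OF g]] iA[OF x]])
      then have "(\<one>\<^bsub>A\<^esub>, x \<otimes>\<^bsub>A\<^esub> g \<otimes>\<^bsub>A\<^esub> inv\<^bsub>A\<^esub> x) \<in> R" using x gc by simp
      then show "x \<otimes>\<^bsub>A\<^esub> g \<otimes>\<^bsub>A\<^esub> inv\<^bsub>A\<^esub> x \<in> G" using GR by blast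
    qed
    have nB: "G \<lhd> B"
      unfolding B.normal_inv_iff
    proof (intro conjI sgB ballI)
      fix x g assume x: "x \<in> carrier B" and g: "g \<in> G"
      have gc: "g \<in> carrier B" using g GK cB by auto
      have xA: "x \<in> carrier A" using x cB by simp
      have "((x,x) \<otimes>\<^bsub>B \<times>\<times> B\<^esub> (\<one>\<^bsub>A\<^esub>, g)) \<otimes>\<^bsub>B \<times>\<times> B\<^esub> (inv\<^bsub>B\<^esub> x, inv\<^bsub>B\<^esub> x) \<in> R"
        by (rule mB[OF mB[OF refl[OF xA] Gm[OF g]] iB[OF xA]])
      then have "(\<one>\<^bsub>A\<^esub>, x \<otimes>\<^bsub>B\<^esub> g \<otimes>\<^bsub>B\<^esub> inv\<^bsub>B\<^esub> x) \<in> R" using x gc by (simp flip: one)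
      then show "x \<otimes>\<^bsub>B\<^esub> g \<otimes>\<^bsub>B\<^esub> inv\<^bsub>B\<^esub> x \<in> G" using GR by blast
    qed
    have lam: "\<forall>x\<in>carrier A. skb_lambda A B x ` G = G"
    proof
      fix x assume x: "x \<in> carrier A"
      show "skb_lambda A B x ` G = G"
      proof
        show "skb_lambda A B x ` G \<subseteq> G"
        proof
          fix y assume "y \<in> skb_lambda A B x ` G"
          then obtain g where g: "g \<in> G" and y: "y = skb_lambda A B x g" by blast
          have gc: "g \<in> carrier A" using g GK by auto
          have "(inv\<^bsub>A\<^esub> x, inv\<^bsub>A\<^esub> x) \<otimes>\<^bsub>A \<times>\<times> A\<^esub> ((x,x) \<otimes>\<^bsub>B \<times>\<times> B\<^esub> (\<one>\<^bsub>A\<^esub>, g)) \<in> R"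
            by (rule mA[OF iA[OF x] mB[OF refl[OF x] Gm[OF g]]])
          then have "(\<one>\<^bsub>A\<^esub>, y) \<in> R" using x gc cB y
            by (simp add: skb_lambda_def flip: one)
          then show "y \<in> G" using GR by blast
        qed
      next
        show "G \<subseteq> skb_lambda A B x ` G"
        proof
          fix g assume g: "g \<in> G"
          have gc: "g \<in> carrier A" using g GK by auto
          define h where "h = inv\<^bsub>B\<^esub> x \<otimes>\<^bsub>B\<^esub> (x \<otimes>\<^bsub>A\<^esub> g)"
          have "(inv\<^bsub>B\<^esub> x, inv\<^bsub>B\<^esub> x) \<otimes>\<^bsub>B \<times>\<times> B\<^esub> ((x,x) \<otimes>\<^bsub>A \<times>\<times> A\<^esub> (\<one>\<^bsub>A\<^esub>, g)) \<in> R"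
            by (rule mB[OF iB[OF x] mA[OF refl[OF x] Gm[OF g]]])
          then have "(\<one>\<^bsub>A\<^esub>, h) \<in> R" using x gc cB
            by (simp add: h_def one)
          then have hG: "h \<in> G" using GR by blast
          have "skb_lambda A B x h = g" using x gc cB
            by (simp add: skb_lambda_def h_def B.tr2 A.tr3)
          then show "g \<in> skb_lambda A B x ` G" using hG by (metis image_eqI)
        qed
      qed
    qed
    show "G \<lhd> A \<and> G \<lhd> B \<and> (\<forall>x\<in>carrier A. skb_lambda A B x ` G = G)" using nA nB lam by blast
  next
    assume H: "G \<lhd> A \<and> G \<lhd> B \<and> (\<forall>x\<in>carrier A. skb_lambda A B x ` G = G)"
    then have nA: "G \<lhd> A" and nB: "G \<lhd> B" and lam: "\<And>x. x \<in> carrier A \<Longrightarrow> skb_lambda A B x ` G = G"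
      by auto
    define R where "R = {(x,y). x \<in> carrier A \<and> y \<in> carrier A \<and> inv\<^bsub>A\<^esub> x \<otimes>\<^bsub>A\<^esub> y \<in> G}"
    have key: "\<And>x y. x \<in> carrier A \<Longrightarrow> y \<in> carrier A \<Longrightarrow>
        (inv\<^bsub>A\<^esub> x \<otimes>\<^bsub>A\<^esub> y \<in> G) = (inv\<^bsub>B\<^esub> x \<otimes>\<^bsub>B\<^esub> y \<in> G)"
    proof -
      fix x y assume x: "x \<in> carrier A" and y: "y \<in> carrier A"
      define u where "u = inv\<^bsub>B\<^esub> x \<otimes>\<^bsub>B\<^esub> y"
      have uc: "u \<in> carrier A" using x y cB u_def by auto
      have lu: "skb_lambda A B x u = inv\<^bsub>A\<^esub> x \<otimes>\<^bsub>A\<^esub> y"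
        using x y cB by (simp add: skb_lambda_def u_def B.tr2)
      show "(inv\<^bsub>A\<^esub> x \<otimes>\<^bsub>A\<^esub> y \<in> G) = (inv\<^bsub>B\<^esub> x \<otimes>\<^bsub>B\<^esub> y \<in> G)"
      proof
        assume "inv\<^bsub>A\<^esub> x \<otimes>\<^bsub>A\<^esub> y \<in> G"
        then have "skb_lambda A B x u \<in> skb_lambda A B x ` G" using lu lam x by simp
        then obtain g where g: "g \<in> G" and e: "skb_lambda A B x u = skb_lambda A B x g" by blast
        have gc: "g \<in> carrier A" using g GK by auto
        have c1: "x \<otimes>\<^bsub>B\<^esub> u \<in> carrier A" using B.m_closed[of x u] x uc cB by simp
        have c2: "x \<otimes>\<^bsub>B\<^esub> g \<in> carrier A" using B.m_closed[of x g] x gc cB by simp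
        have "x \<otimes>\<^bsub>B\<^esub> u = x \<otimes>\<^bsub>B\<^esub> g"
          by (rule A.l_cancel[OF e[unfolded skb_lambda_def] c1 c2 A.inv_closed[OF x]])
        then have "u = g" using x uc gc cB by simp
        then show "inv\<^bsub>B\<^esub> x \<otimes>\<^bsub>B\<^esub> y \<in> G" using g u_def by simp
      next
        assume "inv\<^bsub>B\<^esub> x \<otimes>\<^bsub>B\<^esub> y \<in> G"
        then have "skb_lambda A B x u \<in> skb_lambda A B x ` G" using u_def by simp
        then show "inv\<^bsub>A\<^esub> x \<otimes>\<^bsub>A\<^esub> y \<in> G" using lu lam x by simp
      qed
    qed
    have RB: "R = {(x,y). x \<in> carrier B \<and> y \<in> carrier B \<and> inv\<^bsub>B\<^esub> x \<otimes>\<^bsub>B\<^esub> y \<in> G}"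
      unfolding R_def using key cB by auto
    have eqv: "equiv (carrier A) R"
    proof (rule equivI)
      show "R \<subseteq> carrier A \<times> carrier A" unfolding R_def by auto
    next
      show "refl_on (carrier A) R" unfolding refl_on_def R_def
        using sgA subgroup.one_closed by fastforce
    next
      show "sym R" unfolding sym_def R_def
      proof (clarify)
        fix x y assume x: "x \<in> carrier A" and y: "y \<in> carrier A" and g: "inv\<^bsub>A\<^esub> x \<otimes>\<^bsub>A\<^esub> y \<in> G"
        have "inv\<^bsub>A\<^esub> (inv\<^bsub>A\<^esub> x \<otimes>\<^bsub>A\<^esub> y) \<in> G" by (rule subgroup.m_inv_closed[OF sgA g])
        then show "inv\<^bsub>A\<^esub> y \<otimes>\<^bsub>A\<^esub> x \<in> G" using x y by (simp add: A.inv_mult_group)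
      qed
    next
      show "trans R" unfolding trans_def R_def
      proof (clarify)
        fix x y z assume x: "x \<in> carrier A" and y: "y \<in> carrier A" and z: "z \<in> carrier A"
          and g: "inv\<^bsub>A\<^esub> x \<otimes>\<^bsub>A\<^esub> y \<in> G" and h: "inv\<^bsub>A\<^esub> y \<otimes>\<^bsub>A\<^esub> z \<in> G"
        have "(inv\<^bsub>A\<^esub> x \<otimes>\<^bsub>A\<^esub> y) \<otimes>\<^bsub>A\<^esub> (inv\<^bsub>A\<^esub> y \<otimes>\<^bsub>A\<^esub> z) \<in> G" by (rule subgroup.m_closed[OF sgA g h])
        then show "inv\<^bsub>A\<^esub> x \<otimes>\<^bsub>A\<^esub> z \<in> G" using x y z by (simp add: A.tr)
      qed
    qed
    have sA: "subgroup R (A \<times>\<times> A)" unfolding R_def by (rule rel_subgroup[OF A.group_axioms nA])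
    have sB: "subgroup R (B \<times>\<times> B)" unfolding RB by (rule rel_subgroup[OF B.group_axioms nB])
    have cls: "G = {y. (\<one>\<^bsub>A\<^esub>, y) \<in> R}" unfolding R_def using GK by auto
    show "normal_sub_skew_brace G A B" unfolding normal_sub_skew_brace_def skb_congruence_def sub_skew_brace_def
      using eqv sA sB cls by blast
  qed
qed

end
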